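(* Ideal semantics is not serialisable: there is no selection function $\alpha$ and termination function $\beta$ such that $\mathrm{id}(F)=\mathcal{E}^{\alpha,\beta}(F)$ for every abstract argumentation framework $F$.
   Context: An abstract argumentation framework (AF) is a pair $F=(A,R)$ with $A$ a finite subset of a fixed universal set of arguments $\mathfrak{A}$ and $R\subseteq A\times A$ ($a\to b$ means $(a,b)\in R$). For $S\subseteq A$: $S^+=\{a\mid \exists b\in S: b\to a\}$, $S^-=\{a\mid\exists b\in S: a\to b\}$; for sets $S,S'$, $S\to S'$ means $S^+\cap S'\neq\emptyset$. $S$ is admissible if it is conflict-free and every attacker of an element of $S$ is attacked by some element of $S$. A preferred extension is an inclusion-maximal admissible set. The ideal extension is the inclusion-maximal admissible set $E$ with $E\subseteq E'$ for every preferred extension $E'$; $\mathrm{id}(F)$ is the set of ideal extensions of $F$. An initial set is a non-empty admissible set with no non-empty admissible proper subset; $\mathrm{IS}(F)$ is the set of initial sets. An initial set $S$ is unattacked if $S^-=\emptyset$; unchallenged if $S^-\neq\emptyset$ and no $S'\in\mathrm{IS}(F)$ has $S'\to S$; challenged if some $S'\in\mathrm{IS}(F)$ has $S'\to S$. Write $\mathrm{IS}^{u}(F),\mathrm{IS}^{uc}(F),\mathrm{IS}^{c}(F)$ for these sets. The reduct is $F^S=(A',R\cap(A'\times A'))$ with $A'=A\setminus(S\cup S^+)$. A selection function $\alpha$ maps any three sets $X,Y,Z$ of sets of arguments to a subset of $X\cup Y\cup Z$; a termination function $\beta$ maps pairs $(F,S)$ to $\{0,1\}$. Transitions: $(F,S)\to(F^{S'},S\cup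 S')$ whenever $S'\in\alpha(\mathrm{IS}^u(F),\mathrm{IS}^{uc}(F),\mathrm{IS}^c(F))$. $(F,S)\leadsto^{\alpha,\beta}(F',S')$ means $(F',S')$ is reachable from $(F,S)$ in finitely many (possibly zero) transitions and $\beta(F',S')=1$. $\mathcal{E}^{\alpha,\beta}(F)$ is the set of all $S$ with $(F,\emptyset)\leadsto^{\alpha,\beta}(F',S)$ for some $F'$. A semantics $\sigma$ is serialisable if there exist $\alpha,\beta$ with $\sigma(F)=\mathcal{E}^{\alpha,\beta}(F)$ for all AFs $F$. *)

theory Defs
  imports Main
begin

type_synonym 'a AF = "'a set \<times> ('a \<times> 'a) set"

definition is_AF :: "'a AF \<Rightarrow> bool" where
  "is_AF F \<longleftrightarrow> finite (fst F) \<and> snd F \<subseteq> fst F \<times> fst F"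

definition splus :: "'a AF \<Rightarrow> 'a set \<Rightarrow> 'a set" where
  "splus F S = {a. \<exists>b\<in>S. (b, a) \<in> snd F}"

definition sminus :: "'a AF \<Rightarrow> 'a set \<Rightarrow> 'a set" where
  "sminus F S = {a. \<exists>b\<in>S. (a, b) \<in> snd F}"

definition set_attacks :: "'a AF \<Rightarrow> 'a set \<Rightarrow> 'a set \<Rightarrow> bool" where
  "set_attacks F S S' \<longleftrightarrow> splus F S \<inter> S' \<noteq> {}"

definition conflict_free :: "'a AF \<Rightarrow> 'a set \<Rightarrow> bool" where
  "conflict_free F S \<longleftrightarrow> (\<forall>a\<in>S. \<forall>b\<in>S. (a, b) \<notin> snd F)"

definition admissible :: "'a AF \<Rightarrow> 'a set \<Rightarrow> bool" where
  "admissible F S \<longleftrightarrow> S \<subseteq> fst F \<and> conflict_free F S \<and>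
     (\<forall>a\<in>S. \<forall>b. (b, a) \<in> snd F \<longrightarrow> (\<exists>c\<in>S. (c, b) \<in> snd F))"

definition preferred :: "'a AF \<Rightarrow> 'a set \<Rightarrow> bool" where
  "preferred F S \<longleftrightarrow> admissible F S \<and> (\<forall>T. admissible F T \<and> S \<subseteq> T \<longrightarrow> T = S)"

definition ideal_candidate :: "'a AF \<Rightarrow> 'a set \<Rightarrow> bool" where
  "ideal_candidate F S \<longleftrightarrow> admissible F S \<and> (\<forall>P. preferred F P \<longrightarrow> S \<subseteq> P)"

definition ideal_ext :: "'a AF \<Rightarrow> 'a set set" where
  "ideal_ext F = {E. ideal_candidate F E \<and> (\<forall>T. ideal_candidate F T \<and> E \<subseteq> T \<longrightarrow> T = E)}"

definition initial :: "'a AF \<Rightarrow> 'a set \<Rightarrow> bool" where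
  "initial F S \<longleftrightarrow> S \<noteq> {} \<and> admissible F S \<and>
     (\<forall>T. T \<subset> S \<and> T \<noteq> {} \<longrightarrow> \<not> admissible F T)"

definition IS :: "'a AF \<Rightarrow> 'a set set" where
  "IS F = {S. initial F S}"

definition IS_u :: "'a AF \<Rightarrow> 'a set set" where
  "IS_u F = {S \<in> IS F. sminus F S = {}}"

definition IS_uc :: "'a AF \<Rightarrow> 'a set set" where
  "IS_uc F = {S \<in> IS F. sminus F S \<noteq> {} \<and> \<not> (\<exists>S'\<in>IS F. set_attacks F S' S)}"

definition IS_c :: "'a AF \<Rightarrow> 'a set set" where
  "IS_c F = {S \<in> IS F. \<exists>S'\<in>IS F. set_attacks F S' S}"

definition reduct :: "'a AF \<Rightarrow> 'a set \<Rightarrow> 'a AF" where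
  "reduct F S = (let A' = fst F - (S \<union> splus F S) in (A', snd F \<inter> (A' \<times> A')))"

definition selection_fun :: "('a set set \<Rightarrow> 'a set set \<Rightarrow> 'a set set \<Rightarrow> 'a set set) \<Rightarrow> bool" where
  "selection_fun \<alpha> \<longleftrightarrow> (\<forall>X Y Z. \<alpha> X Y Z \<subseteq> X \<union> Y \<union> Z)"

text \<open>Termination functions map pairs (F, S) to {0,1}; rendered as bool (True = 1).\<close>
definition trans_step ::
  "('a set set \<Rightarrow> 'a set set \<Rightarrow> 'a set set \<Rightarrow> 'a set set) \<Rightarrow> ('a AF \<times> 'a set) \<Rightarrow> ('a AF \<times> 'a set) \<Rightarrow> bool" where
  "trans_step \<alpha> c c' \<longleftrightarrow> (\<exists>S'. S' \<in> \<alpha> (IS_u (fst c)) (IS_uc (fst c)) (IS_c (fst c)) \<and>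
      c' = (reduct (fst c) S', snd c \<union> S'))"

definition serial_ext ::
  "('a set set \<Rightarrow> 'a set set \<Rightarrow> 'a set set \<Rightarrow> 'a set set) \<Rightarrow> ('a AF \<Rightarrow> 'a set \<Rightarrow> bool) \<Rightarrow> 'a AF \<Rightarrow> 'a set set" where
  "serial_ext \<alpha> \<beta> F = {S. \<exists>F'. (trans_step \<alpha>)\<^sup>*\<^sup>* (F, {}) (F', S) \<and> \<beta> F' S}"

definition serialisable :: "('a AF \<Rightarrow> 'a set set) \<Rightarrow> bool" where
  "serialisable \<sigma> \<longleftrightarrow> (\<exists>\<alpha> \<beta>. selection_fun \<alpha> \<and> (\<forall>F. is_AF F \<longrightarrow> \<sigma> F = serial_ext \<alpha> \<beta> F))"

end

theory Submission
  imports Defs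
begin

definition G1 :: "'a \<Rightarrow> 'a \<Rightarrow> 'a \<Rightarrow> 'a \<Rightarrow> 'a AF" where
  "G1 a b c d = ({a,b,c,d}, {(a,b),(b,a),(c,b),(c,d),(d,c)})"
definition G2 :: "'a \<Rightarrow> 'a \<Rightarrow> 'a \<Rightarrow> 'a \<Rightarrow> 'a AF" where
  "G2 a b c d = ({a,b,c,d}, {(a,b),(b,a),(b,b),(c,d),(d,c)})"

lemma adm1: assumes "distinct [a,b,c,d]"
  shows "admissible (G1 a b c d) S \<longleftrightarrow> S \<subseteq> {a,b,c,d} \<and> \<not>(a\<in>S\<and>b\<in>S) \<and> \<not>(b\<in>S\<and>c\<in>S) \<and> \<not>(c\<in>S\<and>d\<in>S) \<and> (b\<in>S\<longrightarrow>d\<in>S)"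
  using assms unfolding admissible_def conflict_free_def G1_def by auto

lemma adm2: assumes "distinct [a,b,c,d]"
  shows "admissible (G2 a b c d) S \<longleftrightarrow> S \<subseteq> {a,b,c,d} \<and> b \<notin> S \<and> \<not>(c\<in>S\<and>d\<in>S)"
  using assms unfolding admissible_def conflict_free_def G2_def by auto

lemma IS1: assumes "distinct [a,b,c,d]"
  shows "IS (G1 a b c d) = {{a},{c},{d}}"
proof -
  have "initial (G1 a b c d) S \<longleftrightarrow> S \<in> {{a},{c},{d}}" for S
  proof
    assume h: "initial (G1 a b c d) S"
    hence ad: "admissible (G1 a b c d) S" and ne: "S \<noteq> {}"
      and mn: "\<And>T. T \<subset> S \<Longrightarrow> T \<noteq> {} \<Longrightarrow> \<not> admissible (G1 a b c d) T"
      unfolding initial_def by auto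
    have s: "S \<subseteq> {a,b,c,d}" using ad adm1[OF assms] by blast
    have "x \<in> S \<Longrightarrow> x \<in> {a,c,d} \<Longrightarrow> S = {x}" for x
      using mn[of "{x}"] adm1[OF assms, of "{x}"] assms by (cases "S = {x}") auto
    moreover have "\<exists>x\<in>{a,c,d}. x \<in> S" using ne s ad adm1[OF assms] by blast
    ultimately show "S \<in> {{a},{c},{d}}" by blast
  next
    assume "S \<in> {{a},{c},{d}}"
    then show "initial (G1 a b c d) S" unfolding initial_def using adm1[OF assms] assms
      by (auto dest: subset_singletonD)
  qed
  thus ?thesis unfolding IS_def by blast
qed

lemma IS2: assumes "distinct [a,b,c,d]"
  shows "IS (G2 a b c d) = {{a},{c},{d}}"
proof -
  have "initial (G2 a b c d) S \<longleftrightarrow> S \<in> {{a},{c},{d}}" for S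
  proof
    assume h: "initial (G2 a b c d) S"
    hence ad: "admissible (G2 a b c d) S" and ne: "S \<noteq> {}"
      and mn: "\<And>T. T \<subset> S \<Longrightarrow> T \<noteq> {} \<Longrightarrow> \<not> admissible (G2 a b c d) T"
      unfolding initial_def by auto
    have s: "S \<subseteq> {a,b,c,d}" using ad adm2[OF assms] by blast
    have "x \<in> S \<Longrightarrow> x \<in> {a,c,d} \<Longrightarrow> S = {x}" for x
      using mn[of "{x}"] adm2[OF assms, of "{x}"] assms by (cases "S = {x}") auto
    moreover have "\<exists>x\<in>{a,c,d}. x \<in> S" using ne s ad adm2[OF assms] by blast
    ultimately show "S \<in> {{a},{c},{d}}" by blast
  next
    assume "S \<in> {{a},{c},{d}}"
    then show "initial (G2 a b c d) S" unfolding initial_def using adm2[OF assms] assms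
      by (auto dest: subset_singletonD)
  qed
  thus ?thesis unfolding IS_def by blast
qed

lemma sa_single: "set_attacks F S' {x} \<longleftrightarrow> x \<in> splus F S'"
  unfolding set_attacks_def by auto

lemma a1: assumes "distinct [a,b,c,d]" "S' \<in> {{a},{c},{d}}" "S \<in> {{a},{c},{d}}"
  shows "set_attacks (G1 a b c d) S' S \<longleftrightarrow> (S' = {c} \<and> S = {d}) \<or> (S' = {d} \<and> S = {c})"
proof -
  have p1: "splus (G1 a b c d) {a} = {b}" "splus (G1 a b c d) {c} = {b,d}" "splus (G1 a b c d) {d} = {c}"
    using assms unfolding splus_def G1_def by auto
  show ?thesis using assms(2,3) apply (elim insertE emptyE)
    using assms(1) by (auto simp add: sa_single p1)
qed

lemma a2: assumes "distinct [a,b,c,d]" "S' \<in> {{a},{c},{d}}" "S \<in> {{a},{c},{d}}"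
  shows "set_attacks (G2 a b c d) S' S \<longleftrightarrow> (S' = {c} \<and> S = {d}) \<or> (S' = {d} \<and> S = {c})"
proof -
  have p1: "splus (G2 a b c d) {a} = {b}" "splus (G2 a b c d) {c} = {d}" "splus (G2 a b c d) {d} = {c}"
    using assms unfolding splus_def G2_def by auto
  show ?thesis using assms(2,3) apply (elim insertE emptyE)
    using assms(1) by (auto simp add: sa_single p1)
qed

lemma triple: assumes "distinct [a,b,c,d]"
  shows "IS_u (G1 a b c d) = IS_u (G2 a b c d)" "IS_uc (G1 a b c d) = IS_uc (G2 a b c d)"
    "IS_c (G1 a b c d) = IS_c (G2 a b c d)"
proof -
  have m1: "sminus (G1 a b c d) {a} = {b}" "sminus (G1 a b c d) {c} = {d}" "sminus (G1 a b c d) {d} = {c}"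
    using assms unfolding sminus_def G1_def by auto
  have m2: "sminus (G2 a b c d) {a} = {b}" "sminus (G2 a b c d) {c} = {d}" "sminus (G2 a b c d) {d} = {c}"
    using assms unfolding sminus_def G2_def by auto
  have m: "S \<in> {{a},{c},{d}} \<Longrightarrow> sminus (G1 a b c d) S \<noteq> {} \<and> sminus (G2 a b c d) S \<noteq> {}" for S
    using m1 m2 by auto
  have u1: "IS_u (G1 a b c d) = {}" "IS_u (G2 a b c d) = {}"
    unfolding IS_u_def IS1[OF assms] IS2[OF assms] using m by auto
  then show "IS_u (G1 a b c d) = IS_u (G2 a b c d)" by simp
  have e: "S' \<in> {{a},{c},{d}} \<Longrightarrow> S \<in> {{a},{c},{d}} \<Longrightarrow>
     set_attacks (G1 a b c d) S' S = set_attacks (G2 a b c d) S' S" for S S'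
    using a1[OF assms] a2[OF assms] by simp
  show "IS_uc (G1 a b c d) = IS_uc (G2 a b c d)"
    unfolding IS_uc_def IS1[OF assms] IS2[OF assms]
    by (rule Collect_cong) (simp add: e m cong: conj_cong)
  show "IS_c (G1 a b c d) = IS_c (G2 a b c d)"
    unfolding IS_c_def IS1[OF assms] IS2[OF assms]
    by (rule Collect_cong) (simp add: e cong: conj_cong)
qed

lemma red: assumes "distinct [a,b,c,d]"
  shows "reduct (G1 a b c d) {a} = reduct (G2 a b c d) {a}"
  using assms unfolding reduct_def splus_def G1_def G2_def Let_def by auto

lemma pref1: assumes "distinct [a,b,c,d]"
  shows "preferred (G1 a b c d) {b,d}"
  unfolding preferred_def adm1[OF assms] using assms by auto

lemma notideal1: assumes "distinct [a,b,c,d]"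
  shows "{a} \<notin> ideal_ext (G1 a b c d)"
  unfolding ideal_ext_def ideal_candidate_def using pref1[OF assms] assms by auto

lemma pref2: assumes "distinct [a,b,c,d]"
  shows "preferred (G2 a b c d) {a,d}" "preferred (G2 a b c d) {a,c}"
  unfolding preferred_def adm2[OF assms] using assms by auto

lemma ideal2: assumes "distinct [a,b,c,d]"
  shows "{a} \<in> ideal_ext (G2 a b c d)"
proof -
  have P: "a \<in> P" if "preferred (G2 a b c d) P" for P
  proof (rule ccontr)
    assume "a \<notin> P"
    have "admissible (G2 a b c d) (insert a P)" using that assms unfolding preferred_def adm2[OF assms] by auto
    then show False using that \<open>a \<notin> P\<close> unfolding preferred_def by blast
  qed
  have C: "ideal_candidate (G2 a b c d) {a}" unfolding ideal_candidate_def adm2[OF assms]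
    using P assms by auto
  have "T = {a}" if "ideal_candidate (G2 a b c d) T" "{a} \<subseteq> T" for T
  proof -
    have "T \<subseteq> {a,d}" "T \<subseteq> {a,c}" using that(1) pref2[OF assms] unfolding ideal_candidate_def by auto
    then show ?thesis using that(2) assms by auto
  qed
  then show ?thesis unfolding ideal_ext_def using C by blast
qed

lemma mono_star: "(trans_step \<alpha>)\<^sup>*\<^sup>* x y \<Longrightarrow> snd x \<subseteq> snd y"
  by (induction rule: rtranclp_induct) (auto simp: trans_step_def)

lemma isaf: "is_AF (G1 a b c d)" "is_AF (G2 a b c d)"
  unfolding is_AF_def G1_def G2_def by auto

theorem theorem8:
  assumes "infinite (UNIV :: 'a set)"
  shows "\<not> serialisable (ideal_ext :: 'a AF \<Rightarrow> 'a set set)"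
proof
  assume "serialisable (ideal_ext :: 'a AF \<Rightarrow> 'a set set)"
  then obtain \<alpha> \<beta> where sel: "selection_fun \<alpha>"
    and eq: "\<And>F::'a AF. is_AF F \<Longrightarrow> ideal_ext F = serial_ext \<alpha> \<beta> F"
    unfolding serialisable_def by blast
  obtain a b c d :: 'a where dist: "distinct [a,b,c,d]"
  proof -
    obtain f :: "nat \<Rightarrow> 'a" where "inj f" using assms infinite_countable_subset by blast
    then have "distinct [f 0, f 1, f 2, f 3]" by (simp add: inj_eq)
    then show ?thesis by (rule that)
  qed
  have "{a} \<in> serial_ext \<alpha> \<beta> (G2 a b c d)" using eq[OF isaf(2)] ideal2[OF dist] by simp
  then obtain F' where st: "(trans_step \<alpha>)\<^sup>*\<^sup>* (G2 a b c d, {}) (F', {a})" and bt: "\<beta> F' {a}"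
    unfolding serial_ext_def by blast
  from st obtain y where s1: "trans_step \<alpha> (G2 a b c d, {}) y" and s2: "(trans_step \<alpha>)\<^sup>*\<^sup>* y (F', {a})"
    by (cases rule: converse_rtranclpE) auto
  from s1 obtain S' where S': "S' \<in> \<alpha> (IS_u (G2 a b c d)) (IS_uc (G2 a b c d)) (IS_c (G2 a b c d))"
    and y: "y = (reduct (G2 a b c d) S', S')" unfolding trans_step_def by auto
  have "S' \<subseteq> {a}" using mono_star[OF s2] y by simp
  moreover have "S' \<in> IS (G2 a b c d)" using S' sel unfolding selection_fun_def IS_u_def IS_uc_def IS_c_def by blast
  ultimately have "S' = {a}" using IS2[OF dist] dist by auto
  hence "trans_step \<alpha> (G1 a b c d, {}) y" using S' y triple[OF dist] red[OF dist] unfolding trans_step_def by auto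
  hence "(trans_step \<alpha>)\<^sup>*\<^sup>* (G1 a b c d, {}) (F', {a})" using s2 by (rule converse_rtranclp_into_rtranclp)
  hence "{a} \<in> serial_ext \<alpha> \<beta> (G1 a b c d)" using bt unfolding serial_ext_def by blast
  then show False using eq[OF isaf(1)] notideal1[OF dist] by simp
qed

end
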